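(* Suppose that $n=2^i(2k+1)$, where $i\ge 1$ and $k\ge 0$ are integers. Then: (1) if $i=1$, then $(n-1)!!\equiv 2k+1 \pmod n$; (2) if $i=2$, then $(n-1)!!\equiv -(2k+1)^2 \pmod n$; (3) if $i>2$, then $(n-1)!!\equiv (2k+1)^{2^{i-2}} \pmod n$.
   Context: For a natural number $m$, the double factorial $m!!$ is the product of the natural numbers less than or equal to $m$ that have the same parity as $m$; thus for even $n$, $(n-1)!!$ is the product of all odd natural numbers less than $n$. *)

theory Defs
  imports Main "HOL-Number_Theory.Cong"
begin

definition dfact :: "nat \<Rightarrow> nat" where
  "dfact m = (\<Prod>j\<in>{j\<in>{1..m}. even j = even m}. j)"

end

theory Submission
  imports Defs
begin

definition r :: "nat \<Rightarrow> int" where "r L = (\<Prod>t<L. 2 * int t + 1)"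

lemma prod_split_add:
  fixes f :: "nat \<Rightarrow> int"
  shows "(\<Prod>t<a+b. f t) = (\<Prod>t<a. f t) * (\<Prod>t<b. f (a + t))"
proof -
  have "(\<Prod>t<a+b. f t) = prod f {0..<a} * prod f {a..<a+b}"
    using prod.atLeastLessThan_concat[of 0 a "a+b" f] by (simp add: atLeast0LessThan)
  also have "prod f {a..<a+b} = (\<Prod>t\<in>{0..<b}. f (t + a))"
    using prod.shift_bounds_nat_ivl[of f 0 a b] by (simp add: add.commute)
  finally show ?thesis by (simp add: atLeast0LessThan add.commute)
qed

lemma dfact_eq: "int (dfact (2*M - 1)) = r M"
proof -
  have S: "{j\<in>{1..2*M-1}. even j = even (2*M-1)} = (\<lambda>t. 2*t+1) ` {..<M}"
  proof (cases "M = 0")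
    case True then show ?thesis by auto
  next
    case False
    show ?thesis
    proof
      show "{j\<in>{1..2*M-1}. even j = even (2*M-1)} \<subseteq> (\<lambda>t. 2*t+1) ` {..<M}"
      proof
        fix j assume "j \<in> {j\<in>{1..2*M-1}. even j = even (2*M-1)}"
        then have j: "j \<ge> 1" "j \<le> 2*M-1" "odd j" using False by auto
        then obtain t where "j = 2*t+1" by (meson oddE)
        then show "j \<in> (\<lambda>t. 2*t+1) ` {..<M}" using j by auto
      qed
    next
      show "(\<lambda>t. 2*t+1) ` {..<M} \<subseteq> {j\<in>{1..2*M-1}. even j = even (2*M-1)}"
        using False by auto
    qed
  qed
  have inj: "inj_on (\<lambda>t::nat. 2*t+1) {..<M}" by (auto simp: inj_on_def)
  have "dfact (2*M-1) = (\<Prod>t<M. 2*t+1)"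
    unfolding dfact_def S prod.reindex[OF inj] comp_def by simp
  then have "int (dfact (2*M-1)) = (\<Prod>t<M. int (2*t+1))" by (simp only: of_nat_prod)
  also have "\<dots> = r M" unfolding r_def by (rule prod.cong) simp_all
  finally show ?thesis .
qed

lemma periodic: "[r (L*m) = r L ^ m] (mod (2 * int L))"
proof (induction m)
  case 0 then show ?case by (simp add: r_def)
next
  case (Suc m)
  have "r (L * Suc m) = r (L*m) * (\<Prod>t<L. 2 * int (L*m + t) + 1)"
    unfolding r_def using prod_split_add[of "\<lambda>t. 2 * int t + 1" "L*m" L]
    by (simp add: add.commute)
  moreover have X: "[(\<Prod>t<L. 2 * int (L*m + t) + 1) = r L] (mod (2 * int L))"
    unfolding r_def
  proof (rule cong_prod)
    fix t assume "t \<in> {..<L}"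
    have "2 * int (L*m + t) + 1 = (2 * int t + 1) + (2 * int L) * int m" by (simp add: algebra_simps)
    then show "[2 * int (L*m + t) + 1 = 2 * int t + 1] (mod (2 * int L))"
      by (simp add: cong_iff_dvd_diff)
  qed
  ultimately show ?case using cong_mult[OF Suc.IH X] by (simp add: mult.commute)
qed

lemma doubling:
  assumes "even L"
  shows "[r (2*L) = r L ^ 2] (mod (4 * int L))"
proof -
  have "r (2*L) = r (L+L)" by (simp only: mult_2)
  also have "\<dots> = r L * (\<Prod>t<L. 2 * int (L + t) + 1)"
    unfolding r_def by (rule prod_split_add)
  also have "(\<Prod>t<L. 2 * int (L + t) + 1) = (\<Prod>t<L. 2 * int (L + (L - Suc t)) + 1)"
    by (rule prod.nat_diff_reindex[where g="\<lambda>t. 2 * int (L + t) + 1", symmetric])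
  also have "\<dots> = (\<Prod>t<L. 4 * int L - (2 * int t + 1))"
    by (rule prod.cong) (auto simp: of_nat_diff)
  finally have e: "r (2*L) = r L * (\<Prod>t<L. 4 * int L - (2 * int t + 1))" .
  have "[(\<Prod>t<L. 4 * int L - (2 * int t + 1)) = (\<Prod>t<L. - (2 * int t + 1))] (mod (4 * int L))"
    by (rule cong_prod) (simp add: cong_iff_dvd_diff)
  moreover have "(\<Prod>t<L. - (2 * int t + 1)) = (-1) ^ L * r L"
    unfolding r_def by (rule trans[OF prod_uminus]) simp
  moreover have "(-1::int) ^ L = 1" using assms by simp
  ultimately have c: "[(\<Prod>t<L. 4 * int L - (2 * int t + 1)) = r L] (mod (4 * int L))" by simp
  have "[r L * (\<Prod>t<L. 4 * int L - (2 * int t + 1)) = r L * r L] (mod (4 * int L))"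
    by (rule cong_mult[OF cong_refl c])
  then show ?thesis unfolding e power2_eq_square .
qed

lemma sq_one:
  fixes a :: int
  assumes "[a = 1] (mod 2^(j+1))"
  shows "[a^2 = 1] (mod 2^(j+2))"
proof -
  obtain c where c: "a - 1 = 2^(j+1) * c" using assms by (auto simp: cong_iff_dvd_diff dvd_def)
  have "a^2 - 1 = (a - 1) * (a - 1 + 2)" by (simp add: algebra_simps power2_eq_square)
  also have "\<dots> = 2^(j+2) * (c * (2^j * c + 1))" unfolding c by (simp add: algebra_simps)
  finally show ?thesis by (simp add: cong_iff_dvd_diff)
qed

lemma sq_mone:
  fixes a :: int
  assumes "[a = -1] (mod 2^(j+1))"
  shows "[a^2 = 1] (mod 2^(j+2))"
proof -
  have "[-a = 1] (mod 2^(j+1))" using assms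
    by (metis cong_minus_minus_iff minus_minus)
  then have "[(-a)^2 = 1] (mod 2^(j+2))" by (rule sq_one)
  then show ?thesis by simp
qed

lemma odd_pow: 
  fixes a :: int
  assumes "odd a"
  shows "[a^(2^Suc j) = 1] (mod 2^(j+3))"
proof (induction j)
  case 0
  have "[a = 1] (mod 2^(1+1)) \<or> [a = -1] (mod 2^(1+1))"
  proof -
    have "a mod 4 = 1 \<or> a mod 4 = 3" using assms by presburger
    then show ?thesis by (auto simp: cong_def)
  qed
  then have "[a^2 = 1] (mod 2^(1+2))" using sq_one sq_mone by blast
  then show ?case by simp
next
  case (Suc j)
  have e: "(j+2)+1 = j+3" by simp
  have H: "[(a^(2^Suc j))^2 = 1] (mod 2^((j+2)+2))"
    using sq_one[of "a^(2^Suc j)" "j+2"] Suc.IH unfolding e by blast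
  have E1: "(a^(2^Suc j))^2 = a^(2^Suc (Suc j))"
    by (simp add: power_mult[symmetric] mult.commute)
  have E2: "(2::int)^((j+2)+2) = 2^(Suc j + 3)" by (simp add: eval_nat_numeral)
  show ?case using H unfolding E1 E2 .
qed

lemma r_pow: "[r (2^(Suc (Suc j))) = 1] (mod 2^(j+3))"
proof (induction j)
  case 0
  show ?case by (simp add: r_def numeral_eq_Suc lessThan_Suc cong_def)
next
  case (Suc j)
  have D0: "[r (2 * 2^(Suc (Suc j))) = r (2^(Suc (Suc j))) ^ 2] (mod (4 * int (2^(Suc (Suc j)))))"
    by (rule doubling) simp
  have E0: "(4 * int (2^(Suc (Suc j)))) = 2^((j+2)+2)" by simp
  have D: "[r (2 * 2^(Suc (Suc j))) = r (2^(Suc (Suc j))) ^ 2] (mod 2^((j+2)+2))"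
    using D0 unfolding E0 .
  have e: "(j+2)+1 = j+3" by simp
  have H: "[r (2^(Suc (Suc j))) ^ 2 = 1] (mod 2^((j+2)+2))"
    using sq_one[of "r (2^(Suc (Suc j)))" "j+2"] Suc.IH unfolding e by blast
  have F: "[r (2 * 2^(Suc (Suc j))) = 1] (mod 2^((j+2)+2))"
    using cong_trans[OF D H] .
  have E1: "(2::nat) * 2^(Suc (Suc j)) = 2^(Suc (Suc (Suc j)))" by simp
  have E2: "(2::int)^((j+2)+2) = 2^(Suc j + 3)" by (simp add: eval_nat_numeral)
  show ?case using F unfolding E1 E2 .
qed


lemma crt2:
  fixes X Y :: int and m i :: nat
  assumes "[X = Y] (mod 2^i)" "int m dvd X" "int m dvd Y" "odd m"
  shows "[X = Y] (mod int (2^i * m))"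
proof -
  have "[X = Y] (mod int m)" using assms(2,3) by (simp add: cong_iff_dvd_diff)
  moreover have "coprime ((2::int)^i) (int m)" using assms(4) by simp
  ultimately have "[X = Y] (mod 2^i * int m)" using assms(1) coprime_cong_mult by blast
  then show ?thesis by simp
qed

lemma m_dvd_r:
  assumes "L \<ge> 1"
  shows "int (2*k+1) dvd r (L * (2*k+1))"
proof -
  have "1*(2*k+1) \<le> L*(2*k+1)" using assms by (rule mult_le_mono1)
  then have "k \<in> {..<L * (2*k+1)}" by simp
  then have "(2 * int k + 1) dvd r (L * (2*k+1))" unfolding r_def
    by (rule dvd_prodI[where f="\<lambda>t. 2 * int t + 1", OF finite_lessThan])
  then show ?thesis by (simp add: add.commute)
qed

theorem theorem14:
  fixes n i k :: nat
  assumes "n = 2 ^ i * (2 * k + 1)" and "i \<ge> 1"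
  shows "(i = 1 \<longrightarrow> [int (dfact (n - 1)) = int (2 * k + 1)] (mod int n))
       \<and> (i = 2 \<longrightarrow> [int (dfact (n - 1)) = - (int (2 * k + 1) ^ 2)] (mod int n))
       \<and> (i > 2 \<longrightarrow> [int (dfact (n - 1)) = int (2 * k + 1) ^ (2 ^ (i - 2))] (mod int n))"
proof -
  define m where "m = 2*k+1"
  define L :: nat where "L = 2^(i-1)"
  have oddm: "odd m" and oddmi: "odd (int m)" unfolding m_def by simp_all
  have L1: "L \<ge> 1" unfolding L_def by simp
  have twoL: "2 * L = 2^i" unfolding L_def using assms(2)
    by (metis Suc_diff_le diff_Suc_1 power_Suc)
  have nL: "n = 2 * (L * m)" using assms(1) twoL unfolding m_def by simp
  have X: "int (dfact (n - 1)) = r (L*m)" unfolding nL by (rule dfact_eq)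
  have A: "[r (L*m) = r L ^ m] (mod 2^i)"
    using periodic[of L m] twoL by (metis of_nat_numeral of_nat_mult of_nat_power)
  have B: "int m dvd r (L*m)" unfolding m_def using m_dvd_r[OF L1] .
  have n2: "int n = int (2^i * m)" using assms(1) m_def by simp
  have c1: "i = 1 \<longrightarrow> [int (dfact (n - 1)) = int m] (mod int n)"
  proof
    assume i1: "i = 1"
    then have "L = 1" unfolding L_def by simp
    then have "r L = 1" by (simp add: r_def)
    then have "[r (L*m) = 1] (mod 2^i)" using A by simp
    moreover have "[1 = int m] (mod 2^i)" using oddmi
      by (simp add: i1 cong_def) presburger
    ultimately have "[r (L*m) = int m] (mod 2^i)" by (rule cong_trans)
    then show "[int (dfact (n - 1)) = int m] (mod int n)"
      unfolding X n2 using crt2[OF _ B _ oddm] by simp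
  qed
  have c2: "i = 2 \<longrightarrow> [int (dfact (n - 1)) = - (int m ^ 2)] (mod int n)"
  proof
    assume i2: "i = 2"
    then have "L = 2" unfolding L_def by simp
    then have "r L = 3" by (simp add: r_def numeral_eq_Suc lessThan_Suc)
    then have "[r (L*m) = 3 ^ m] (mod 4)" using A i2 by simp
    moreover have "[(3::int) ^ m = (-1) ^ m] (mod 4)" by (rule cong_pow) (simp add: cong_def)
    moreover have "((-1)::int) ^ m = -1" using oddm by simp
    ultimately have a: "[r (L*m) = -1] (mod 4)" by (metis cong_trans)
    have "[int m ^ (2^Suc 0) = 1] (mod 2^(0+3))" by (rule odd_pow[OF oddmi])
    then have "[int m ^ 2 = 1] (mod 8)" by simp
    then have "[int m ^ 2 = 1] (mod 4)" by (rule cong_dvd_modulus) simp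
    then have "[- (int m ^ 2) = -1] (mod 4)" by (simp add: cong_minus_minus_iff)
    then have "[r (L*m) = - (int m ^ 2)] (mod 4)"
      using cong_trans[OF a cong_sym] by blast
    moreover have "(2::int)^i = 4" using i2 by simp
    ultimately have P: "[r (L*m) = - (int m ^ 2)] (mod 2^i)" by simp
    have Q: "int m dvd - (int m ^ 2)" by simp
    show "[int (dfact (n - 1)) = - (int m ^ 2)] (mod int n)"
      unfolding X n2 by (rule crt2[OF P B Q oddm])
  qed
  have c3: "i > 2 \<longrightarrow> [int (dfact (n - 1)) = int m ^ (2 ^ (i - 2))] (mod int n)"
  proof
    assume i3: "i > 2"
    define j where "j = i - 3"
    have j: "i = j + 3" using i3 unfolding j_def by simp
    have LL: "L = 2^(Suc (Suc j))" unfolding L_def j by simp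
    have "[r L = 1] (mod 2^(j+3))" unfolding LL by (rule r_pow)
    then have "[r L = 1] (mod 2^i)" unfolding j .
    then have "[r L ^ m = 1 ^ m] (mod 2^i)" by (rule cong_pow)
    then have a: "[r (L*m) = 1] (mod 2^i)" using cong_trans[OF A] by simp
    have "[int m ^ (2^Suc j) = 1] (mod 2^(j+3))" by (rule odd_pow[OF oddmi])
    moreover have "i - 2 = Suc j" using j by simp
    ultimately have "[int m ^ (2^(i-2)) = 1] (mod 2^i)" unfolding j by simp
    then have P: "[r (L*m) = int m ^ (2^(i-2))] (mod 2^i)" using cong_trans[OF a cong_sym] by blast
    have Q: "int m dvd int m ^ (2^(i-2))" by simp
    show "[int (dfact (n - 1)) = int m ^ (2 ^ (i - 2))] (mod int n)"
      unfolding X n2 by (rule crt2[OF P B Q oddm])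
  qed
  show ?thesis using c1 c2 c3 unfolding m_def by blast
qed

end
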